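(* Let $d$ be a degree sequence with complementary sequence $\overline d$. Then $\Delta_{m(\overline d)}(\overline d)=\Delta_{m(d)}(d)$; that is, the last principal Erdős–Gallai differences of $d$ and $\overline d$ coincide.
   Context: Degree sequences $d=(d_1,\dots,d_n)$ (of finite simple graphs, terms may be $0$) are listed in nonincreasing order; $\overline d=(n-1-d_n,\dots,n-1-d_1)$ is the complementary sequence. $m(d)=\max\{i : d_i\ge i-1\}$. For integers $k\ge 0$, $\Delta_k(d)=k(k-1)+\sum_{i>k}\min\{k,d_i\}-\sum_{i\le k}d_i$. *)

theory Defs
  imports Main
begin

text \<open>A sequence d = (d_1,...,d_n) is represented by a list of naturals; d_i is d ! (i-1).
  A graph on vertex set {0..<n} is a symmetric irreflexive edge set E.\<close>

definition graphic :: "nat list \<Rightarrow> bool" where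
  "graphic d \<longleftrightarrow> (\<exists>E :: (nat \<times> nat) set.
      E \<subseteq> {..<length d} \<times> {..<length d} \<and>
      (\<forall>i j. (i, j) \<in> E \<longrightarrow> (j, i) \<in> E) \<and>
      (\<forall>i. (i, i) \<notin> E) \<and>
      (\<forall>i < length d. card {j. (i, j) \<in> E} = d ! i))"

definition degree_sequence :: "nat list \<Rightarrow> bool" where
  "degree_sequence d \<longleftrightarrow> graphic d \<and> sorted_wrt (\<ge>) d"

definition compl_seq :: "nat list \<Rightarrow> nat list" where
  "compl_seq d = rev (map (\<lambda>x. length d - 1 - x) d)"

definition dseq :: "nat list \<Rightarrow> nat \<Rightarrow> nat" where
  "dseq d i = d ! (i - 1)"

definition mEG :: "nat list \<Rightarrow> nat" where
  "mEG d = Max ({0} \<union> {i \<in> {1..length d}. int (dseq d i) \<ge> int i - 1})"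

definition DeltaEG :: "nat \<Rightarrow> nat list \<Rightarrow> int" where
  "DeltaEG k d = int k * (int k - 1)
     + (\<Sum>i \<in> {k<..length d}. int (min k (dseq d i)))
     - (\<Sum>i \<in> {1..min k (length d)}. int (dseq d i))"

end

theory Submission
  imports Defs
begin

lemma mEG_eqI:
  assumes "1 \<le> m" "m \<le> length x" "m \<le> dseq x m + 1"
    and srt: "\<And>i j. 1 \<le> i \<Longrightarrow> i \<le> j \<Longrightarrow> j \<le> length x \<Longrightarrow> dseq x j \<le> dseq x i"
    and nx: "m < length x \<Longrightarrow> dseq x (m+1) < m"
  shows "mEG x = m"
  unfolding mEG_def
proof (rule Max_eqI)
  show "finite ({0} \<union> {i \<in> {1..length x}. int i - 1 \<le> int (dseq x i)})" by auto
  show "m \<in> {0} \<union> {i \<in> {1..length x}. int i - 1 \<le> int (dseq x i)}" using assms(1-3) by auto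
  fix y assume "y \<in> {0} \<union> {i \<in> {1..length x}. int i - 1 \<le> int (dseq x i)}"
  then have y: "y = 0 \<or> (1 \<le> y \<and> y \<le> length x \<and> int y - 1 \<le> int (dseq x y))" by auto
  show "y \<le> m"
  proof (rule ccontr)
    assume "\<not> y \<le> m"
    with y have "m + 1 \<le> y" "y \<le> length x" "int y - 1 \<le> int (dseq x y)" by auto
    moreover have "dseq x y \<le> dseq x (m+1)" using srt[of "m+1" y] calculation by auto
    moreover have "dseq x (m+1) < m" using nx calculation by auto
    ultimately show False by linarith
  qed
qed

lemma mEG_props:
  assumes "1 \<le> length x"
  shows "1 \<le> mEG x \<and> mEG x \<le> length x \<and> mEG x \<le> dseq x (mEG x) + 1 \<and>
     (mEG x < length x \<longrightarrow> dseq x (mEG x + 1) < mEG x)"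
proof -
  define S where "S = {0} \<union> {i \<in> {1..length x}. int i - 1 \<le> int (dseq x i)}"
  define M where "M = Max S"
  have fin: "finite S" unfolding S_def by auto
  have "M \<in> S" using fin unfolding M_def by (intro Max_in) (auto simp: S_def)
  moreover have "1 \<in> S" using assms by (auto simp: S_def)
  hence "1 \<le> M" using fin unfolding M_def by (meson Max_ge)
  ultimately have A: "1 \<le> M" "M \<le> length x" "M \<le> dseq x M + 1" by (auto simp: S_def)
  have B: "dseq x (M + 1) < M" if "M < length x"
  proof (rule ccontr)
    assume "\<not> ?thesis"
    hence "M + 1 \<in> S" using that by (auto simp: S_def)
    hence "M + 1 \<le> M" using fin unfolding M_def by (meson Max_ge)
    thus False by simp
  qed
  have e: "mEG x = M" unfolding mEG_def M_def S_def by (rule refl)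
  show ?thesis unfolding e using A B by blast
qed

lemma Delta_simp:
  assumes "k \<le> length x" "\<And>i. k < i \<Longrightarrow> i \<le> length x \<Longrightarrow> dseq x i \<le> k"
  shows "DeltaEG k x = int k * (int k - 1) + (\<Sum>i\<in>{k<..length x}. int (dseq x i))
      - (\<Sum>i\<in>{1..k}. int (dseq x i))"
proof -
  have "(\<Sum>i\<in>{k<..length x}. int (min k (dseq x i))) = (\<Sum>i\<in>{k<..length x}. int (dseq x i))"
    using assms(2) by (intro sum.cong) auto
  thus ?thesis unfolding DeltaEG_def using assms(1) by (simp add: min_absorb1)
qed

lemma reidx1:
  fixes a n :: nat
  assumes "a \<le> n"
  shows "(\<Sum>i\<in>{a<..n}. h (n+1-i)) = (\<Sum>j\<in>{1..n-a}. (h j :: int))"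
  by (rule sum.reindex_bij_witness[of _ "\<lambda>j. n+1-j" "\<lambda>j. n+1-j"]) (use assms in auto)

lemma reidx2:
  fixes a n :: nat
  assumes "a \<le> n"
  shows "(\<Sum>i\<in>{1..a}. h (n+1-i)) = (\<Sum>j\<in>{n-a<..n}. (h j :: int))"
  by (rule sum.reindex_bij_witness[of _ "\<lambda>j. n+1-j" "\<lambda>j. n+1-j"]) (use assms in auto)

theorem corollary7:
  assumes "degree_sequence d"
  shows "DeltaEG (mEG (compl_seq d)) (compl_seq d) = DeltaEG (mEG d) d"
proof (cases "d = []")
  case True
  then show ?thesis by (simp add: compl_seq_def)
next
  case False
  define n where "n = length d"
  have n1: "1 \<le> n" using False n_def by (cases d) auto
  from assms obtain E where E: "E \<subseteq> {..<n} \<times> {..<n}" "\<forall>i. (i, i) \<notin> E"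
      "\<forall>i < n. card {j. (i, j) \<in> E} = d ! i" and srt0: "sorted_wrt (\<ge>) d"
    unfolding degree_sequence_def graphic_def n_def by blast
  have bnd0: "d ! i \<le> n - 1" if "i < n" for i
  proof -
    have "{j. (i, j) \<in> E} \<subseteq> {..<n} - {i}" using E by auto
    hence "card {j. (i, j) \<in> E} \<le> card ({..<n} - {i})" by (intro card_mono) auto
    thus ?thesis using E(3) that by auto
  qed
  have bnd: "dseq d i \<le> n - 1" if "1 \<le> i" "i \<le> n" for i
    unfolding dseq_def using bnd0 that by auto
  have srt: "dseq d j \<le> dseq d i" if "1 \<le> i" "i \<le> j" "j \<le> n" for i j
  proof (cases "i = j")
    case False
    thus ?thesis using srt0 that unfolding dseq_def sorted_wrt_iff_nth_less n_def by auto
  qed simp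
  define c where "c = compl_seq d"
  have lc: "length c = n" unfolding c_def compl_seq_def n_def by simp
  have cval: "dseq c i = n - 1 - dseq d (n+1-i)" if "1 \<le> i" "i \<le> n" for i
  proof -
    have "c ! (i-1) = rev (map (\<lambda>x. n - 1 - x) d) ! (i - 1)" unfolding c_def compl_seq_def n_def by (rule refl)
    also have "\<dots> = (map (\<lambda>x. n - 1 - x) d) ! (n - 1 - (i - 1))"
      using that by (subst rev_nth) (auto simp: n_def)
    also have "\<dots> = n - 1 - d ! (n - i)" using that by (auto simp: n_def)
    finally show ?thesis unfolding dseq_def using that by (simp add: Suc_diff_le)
  qed
  have srtc: "dseq c j \<le> dseq c i" if "1 \<le> i" "i \<le> j" "j \<le> length c" for i j
  proof -
    have "dseq d (n+1-i) \<le> dseq d (n+1-j)" using that srt[of "n+1-j" "n+1-i"] lc by auto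
    hence "n - 1 - dseq d (n+1-j) \<le> n - 1 - dseq d (n+1-i)" by (rule diff_le_mono2)
    thus ?thesis using that lc by (simp add: cval)
  qed
  define m where "m = mEG d"
  have mp: "1 \<le> m" "m \<le> n" "m \<le> dseq d m + 1" "m < n \<Longrightarrow> dseq d (m + 1) < m"
    using mEG_props[of d] n1 unfolding m_def n_def by auto
  define f where "f j = int (dseq d j)" for j
  define A where "A = (\<Sum>j\<in>{1..m}. f j)"
  define B where "B = (\<Sum>j\<in>{m<..n}. f j)"
  have Dd: "DeltaEG m d = int m * (int m - 1) + B - A"
    unfolding A_def B_def f_def n_def
  proof (rule Delta_simp)
    show "m \<le> length d" using mp n_def by simp
    fix i assume "m < i" "i \<le> length d"
    thus "dseq d i \<le> m" using srt[of "m+1" i] mp n_def by fastforce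
  qed
  have cint: "int (dseq c i) = int n - 1 - f (n+1-i)" if "1 \<le> i" "i \<le> n" for i
  proof -
    have "dseq d (n+1-i) \<le> n - 1" using bnd[of "n+1-i"] that by auto
    thus ?thesis using cval[OF that] n1 unfolding f_def by linarith
  qed
  have fb: "f j \<le> int n - 1" if "1 \<le> j" "j \<le> n" for j
    using bnd[OF that] n1 unfolding f_def by linarith
  show ?thesis
  proof (cases "dseq d m + 1 = m")
    case False
    hence dm: "m \<le> dseq d m" using mp by auto
    have mn: "m < n" using dm bnd[of m] mp by linarith
    have mc: "mEG c = n - m"
    proof (rule mEG_eqI)
      show "1 \<le> n - m" "n - m \<le> length c" using mn lc by auto
      show "n - m \<le> dseq c (n - m) + 1" using cval[of "n-m"] mn mp by (auto simp: Suc_diff_le)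
      show "dseq c j \<le> dseq c i" if "1 \<le> i" "i \<le> j" "j \<le> length c" for i j using srtc that by blast
      show "dseq c (n - m + 1) < n - m" using cval[of "n-m+1"] mn mp dm by auto
    qed
    have Dc: "DeltaEG (n-m) c = int (n-m) * (int (n-m) - 1) + (\<Sum>i\<in>{n-m<..n}. int (dseq c i))
      - (\<Sum>i\<in>{1..n-m}. int (dseq c i))"
    proof (rule Delta_simp[of "n-m" c, unfolded lc])
      show "n - m \<le> n" by simp
      fix i assume "n - m < i" "i \<le> n"
      moreover have "1 \<le> n+1-i" "n+1-i \<le> m" using calculation by linarith+
      moreover have "m \<le> dseq d (n+1-i)" using srt[of "n+1-i" m] dm calculation mp by linarith
      ultimately show "dseq c i \<le> n - m" using cval[of i] by auto
    qed
    have s1: "(\<Sum>i\<in>{n-m<..n}. int (dseq c i)) = (\<Sum>j\<in>{1..m}. int n - 1 - f j)"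
    proof -
      have "(\<Sum>i\<in>{n-m<..n}. int (dseq c i)) = (\<Sum>i\<in>{n-m<..n}. int n - 1 - f (n+1-i))"
        using mp by (intro sum.cong) (auto simp: cint)
      also have "\<dots> = (\<Sum>j\<in>{1..n-(n-m)}. int n - 1 - f j)"
        by (rule reidx1[where h="\<lambda>j. int n - 1 - f j"]) simp
      finally show ?thesis using mp by simp
    qed
    have s2: "(\<Sum>i\<in>{1..n-m}. int (dseq c i)) = (\<Sum>j\<in>{m<..n}. int n - 1 - f j)"
    proof -
      have "(\<Sum>i\<in>{1..n-m}. int (dseq c i)) = (\<Sum>i\<in>{1..n-m}. int n - 1 - f (n+1-i))"
        by (intro sum.cong) (auto simp: cint)
      also have "\<dots> = (\<Sum>j\<in>{n-(n-m)<..n}. int n - 1 - f j)"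
        by (rule reidx2[where h="\<lambda>j. int n - 1 - f j"]) simp
      finally show ?thesis using mp by simp
    qed
    have s1': "(\<Sum>j\<in>{1..m}. int n - 1 - f j) = int m * (int n - 1) - A"
      unfolding A_def by (simp add: sum_subtractf)
    have s2': "(\<Sum>j\<in>{m<..n}. int n - 1 - f j) = int (n - m) * (int n - 1) - B"
      unfolding B_def by (simp add: sum_subtractf)
    have "DeltaEG (mEG c) c = int (n-m) * (int (n-m) - 1) + (int m * (int n - 1) - A)
        - (int (n - m) * (int n - 1) - B)"
      using Dc s1 s2 s1' s2' mc by simp
    also have "\<dots> = int m * (int m - 1) + B - A"
      using mp by (simp add: of_nat_diff algebra_simps)
    finally show ?thesis using Dd c_def m_def by simp
  next
    case True
    hence dm: "dseq d m + 1 = m" .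
    obtain p where p: "m = Suc p" using mp by (cases m) auto
    have mc: "mEG c = n + 1 - m"
    proof (rule mEG_eqI)
      show "1 \<le> n + 1 - m" "n + 1 - m \<le> length c" using mp lc by auto
      show "n + 1 - m \<le> dseq c (n + 1 - m) + 1" using cval[of "n+1-m"] mp dm by auto
      show "dseq c j \<le> dseq c i" if "1 \<le> i" "i \<le> j" "j \<le> length c" for i j using srtc that by blast
      show "dseq c (n + 1 - m + 1) < n + 1 - m" if "n + 1 - m < length c"
      proof -
        have "2 \<le> m" using that lc by auto
        hence "m - 1 \<le> dseq d (m - 1)" using srt[of "m-1" m] dm mp by linarith
        moreover have e1: "n + 1 - m + 1 = n+2-m" "n+1-(n+2-m) = m-1" "1 \<le> n+2-m" "n+2-m \<le> n"
          using mp \<open>2 \<le> m\<close> by auto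
        moreover have "dseq c (n+2-m) = n - 1 - dseq d (m-1)" using cval[of "n+2-m"] e1 by simp
        ultimately show ?thesis using mp \<open>2 \<le> m\<close> unfolding e1(1) by linarith
      qed
    qed
    have Dc: "DeltaEG (n+1-m) c = int (n+1-m) * (int (n+1-m) - 1) + (\<Sum>i\<in>{n+1-m<..n}. int (dseq c i))
      - (\<Sum>i\<in>{1..n+1-m}. int (dseq c i))"
    proof (rule Delta_simp[of "n+1-m" c, unfolded lc])
      show "n + 1 - m \<le> n" using mp by simp
      fix i assume "n + 1 - m < i" "i \<le> n"
      moreover have "1 \<le> n+1-i" "n+1-i \<le> m" using calculation mp by linarith+
      moreover have "m - 1 \<le> dseq d (n+1-i)" using srt[of "n+1-i" m] dm calculation mp by linarith
      ultimately show "dseq c i \<le> n + 1 - m" using cval[of i] mp by linarith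
    qed
    have s1: "(\<Sum>i\<in>{n+1-m<..n}. int (dseq c i)) = (\<Sum>j\<in>{1..p}. int n - 1 - f j)"
    proof -
      have "(\<Sum>i\<in>{n+1-m<..n}. int (dseq c i)) = (\<Sum>i\<in>{n+1-m<..n}. int n - 1 - f (n+1-i))"
        using mp by (intro sum.cong) (auto simp: cint)
      also have "\<dots> = (\<Sum>j\<in>{1..n-(n+1-m)}. int n - 1 - f j)"
        by (rule reidx1[where h="\<lambda>j. int n - 1 - f j"]) (use mp in simp)
      finally show ?thesis using mp p by simp
    qed
    have s2: "(\<Sum>i\<in>{1..n+1-m}. int (dseq c i)) = (\<Sum>j\<in>{p<..n}. int n - 1 - f j)"
    proof -
      have "(\<Sum>i\<in>{1..n+1-m}. int (dseq c i)) = (\<Sum>i\<in>{1..n+1-m}. int n - 1 - f (n+1-i))"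
        using mp by (intro sum.cong) (auto simp: cint)
      also have "\<dots> = (\<Sum>j\<in>{n-(n+1-m)<..n}. int n - 1 - f j)"
        by (rule reidx2[where h="\<lambda>j. int n - 1 - f j"]) (use mp in simp)
      finally show ?thesis using mp p by simp
    qed
    have fm: "f m = int m - 1" unfolding f_def using dm by linarith
    have A': "A = (\<Sum>j\<in>{1..p}. f j) + f m" unfolding A_def p by simp
    have B': "(\<Sum>j\<in>{p<..n}. f j) = f m + B"
    proof -
      have "(\<Sum>j\<in>{p<..n}. f j) = (\<Sum>j\<in>{Suc p..n}. f j)"
        by (simp add: atLeastSucAtMost_greaterThanAtMost)
      also have "\<dots> = f (Suc p) + (\<Sum>j\<in>{Suc (Suc p)..n}. f j)"
        using mp p by (intro sum.atLeast_Suc_atMost) simp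
      finally show ?thesis unfolding B_def p by (simp add: atLeastSucAtMost_greaterThanAtMost)
    qed
    have s1': "(\<Sum>j\<in>{1..p}. int n - 1 - f j) = int p * (int n - 1) - (\<Sum>j\<in>{1..p}. f j)"
      by (simp add: sum_subtractf)
    have s2': "(\<Sum>j\<in>{p<..n}. int n - 1 - f j) = int (n - p) * (int n - 1) - (\<Sum>j\<in>{p<..n}. f j)"
      by (simp add: sum_subtractf)
    have "DeltaEG (mEG c) c = int (n+1-m) * (int (n+1-m) - 1) + (int p * (int n - 1) - (A - f m))
        - (int (n - p) * (int n - 1) - (f m + B))"
      using Dc s1 s2 s1' s2' mc A' B' by simp
    also have "\<dots> = int m * (int m - 1) + B - A"
      using mp p fm by (simp add: of_nat_diff algebra_simps)
    finally show ?thesis using Dd c_def m_def by simp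
  qed
qed

end
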